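(* Let $N\ge 2$ and $m\ge N$ be integers, let $c_1,\dots,c_m$ be contents with request probabilities $\rho_1,\dots,\rho_m\ge 0$, $\sum_{\ell=1}^m\rho_\ell=1$, and set $\mathcal{P}_{\textup{hit}}=\sum_{\kappa=1}^{N}\rho_\kappa$. Consider users $u_1,\dots,u_N$, where $u_\kappa$ caches exactly the content $c_\kappa$, and where each user $u_\mu$ independently requests a single content $R_\mu$ with $\Pr(R_\mu=c_\ell)=\rho_\ell$. Let $K$ be uniform on $\{1,\dots,N\}$, independent of the requests, and consider the operating mode of the user $u_K$ (modes defined in the context). Then \begin{align*} \mathcal{P}_{\textup{SR}}&= \tfrac{1}{N} \textstyle\sum_{\kappa=1}^{N} \rho_\kappa \left(1-\rho_\kappa\right)^{N-1},\\ \mathcal{P}_{\textup{SR-HDTX}} &= \tfrac{1}{N} \textstyle\sum_{\kappa=1}^{N}\rho_\kappa \left(1-\left(1-\rho_\kappa \right)^{N-1}\right),\\ \mathcal{P}_{\textup{FDTR}} &= \tfrac{1}{N} \textstyle\sum_{\kappa=1}^{N}\left(\mathcal{P}_{\textup{hit}}-\rho_\kappa \right)\left(1-\left(1-\rho_\kappa \right)^{N-1}\right),\\ \mathcal{P}_{\textup{BFD}} &= \tfrac{1}{N} \textstyle\sum_{\kappa=1}^{N}\left(\mathcal{P}_{\textup{hit}}-\rho_\kappa \right)\rho_\kappa,\\ \mathcal{P}_{\textup{TNFD}} &= \tfrac{1}{N} \textstyle\sum_{\kappa=1}^{N}\left(\mathcal{P}_{\textup{hit}}-\rho_\kappa \right)\left(1-\rho_\kappa-\left(1-\rho_\kappa\right)^{N-1}\right),\\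 \mathcal{P}_{\textup{HDRX}} &= \tfrac{1}{N} \textstyle\sum_{\kappa=1}^{N}\left(\mathcal{P}_{\textup{hit}}-\rho_\kappa \right)\left(1-\rho_\kappa\right)^{N-1},\\ \mathcal{P}_{\textup{HDTX}} &= \tfrac{1}{N} \textstyle\sum_{\kappa=1}^{N}\left(1-\mathcal{P}_{\textup{hit}}\right)\left(1-\left(1-\rho_\kappa \right)^{N-1}\right),\\ \mathcal{P}_{\textup{HO}} &= \tfrac{1}{N} \textstyle\sum_{\kappa=1}^{N}\left(1-\mathcal{P}_{\textup{hit}}\right)\left(1-\rho_\kappa \right)^{N-1}. \end{align*}
   Context: For a user $u_\kappa$, let $S_\kappa$ be the event that there exists $\mu\ne\kappa$, $\mu\in\{1,\dots,N\}$, with $R_\mu=c_\kappa$ (some other user requests the content cached by $u_\kappa$). The operating modes of $u_\kappa$ are: SR (self-request): $R_\kappa=c_\kappa$ and not $S_\kappa$; SR-HDTX: $R_\kappa=c_\kappa$ and $S_\kappa$; FDTR (full-duplex transceiver): $R_\kappa=c_\mu$ for some $\mu\in\{1,\dots,N\}\setminus\{\kappa\}$, and $S_\kappa$; BFD (bi-directional full-duplex): $R_\kappa=c_\mu$ for some $\mu\in\{1,\dots,N\}\setminus\{\kappa\}$ and this $u_\mu$ has $R_\mu=c_\kappa$; TNFD (three-node full-duplex): FDTR holds but BFD does not; HDRX (half-duplex receiver): $R_\kappa=c_\mu$ for some $\mu\in\{1,\dots,N\}\setminus\{\kappa\}$ and not $S_\kappa$; HDTX (half-duplex transmitter): $R_\kappa\notin\{c_1,\dots,c_N\}$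 and $S_\kappa$; HO (hitting outage): $R_\kappa\notin\{c_1,\dots,c_N\}$ and not $S_\kappa$. For a mode $\Delta$, $\mathcal{P}_\Delta$ denotes the probability that $u_K$ is in mode $\Delta$. *)

theory Defs
  imports Complex_Main "HOL-Library.FuncSet"
begin

text \<open>Contents are indexed by 1..m; user u_k caches content c_k, i.e. content index k.
  A request profile is a function r from users {1..N} to content indices {1..m}
  (r mu = l means R_mu = c_l).\<close>

datatype mode = SR | SR_HDTX | FDTR | BFD | TNFD | HDRX | HDTX | HO

definition S_event :: "nat \<Rightarrow> (nat \<Rightarrow> nat) \<Rightarrow> nat \<Rightarrow> bool" where
  "S_event N r k \<longleftrightarrow> (\<exists>mu\<in>{1..N}. mu \<noteq> k \<and> r mu = k)"

definition in_mode :: "nat \<Rightarrow> (nat \<Rightarrow> nat) \<Rightarrow> nat \<Rightarrow> mode \<Rightarrow> bool" where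
  "in_mode N r k D = (case D of
      SR \<Rightarrow> r k = k \<and> \<not> S_event N r k
    | SR_HDTX \<Rightarrow> r k = k \<and> S_event N r k
    | FDTR \<Rightarrow> (\<exists>mu\<in>{1..N} - {k}. r k = mu) \<and> S_event N r k
    | BFD \<Rightarrow> (\<exists>mu\<in>{1..N} - {k}. r k = mu \<and> r mu = k)
    | TNFD \<Rightarrow> ((\<exists>mu\<in>{1..N} - {k}. r k = mu) \<and> S_event N r k)
              \<and> \<not> (\<exists>mu\<in>{1..N} - {k}. r k = mu \<and> r mu = k)
    | HDRX \<Rightarrow> (\<exists>mu\<in>{1..N} - {k}. r k = mu) \<and> \<not> S_event N r k
    | HDTX \<Rightarrow> r k \<notin> {1..N} \<and> S_event N r k
    | HO \<Rightarrow> r k \<notin> {1..N} \<and> \<not> S_event N r k)"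

definition P_mode :: "nat \<Rightarrow> nat \<Rightarrow> (nat \<Rightarrow> real) \<Rightarrow> mode \<Rightarrow> real" where
  "P_mode N m rho D =
     (\<Sum>k\<in>{1..N}. (1 / real N) *
        (\<Sum>r\<in>PiE {1..N} (\<lambda>_. {1..m}).
           (\<Prod>mu\<in>{1..N}. rho (r mu)) * (if in_mode N r k D then 1 else 0)))"

definition P_hit :: "nat \<Rightarrow> (nat \<Rightarrow> real) \<Rightarrow> real" where
  "P_hit N rho = (\<Sum>k\<in>{1..N}. rho k)"

end

theory Submission
  imports Defs "HOL-Library.FuncSet"
begin

lemma prod_ind:
  assumes "finite I"
  shows "(\<Prod>mu\<in>I. (if P mu then 1 else 0::real)) = (if \<forall>mu\<in>I. P mu then 1 else 0)"
proof (cases "\<forall>mu\<in>I. P mu")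
  case True thus ?thesis by simp
next
  case False
  then obtain mu where "mu \<in> I" "\<not> P mu" by blast
  hence "(\<Prod>mu\<in>I. (if P mu then 1 else 0::real)) = 0" using assms
    by (simp add: prod_zero_iff) blast
  thus ?thesis using False by simp
qed

definition inner :: "nat \<Rightarrow> nat \<Rightarrow> (nat \<Rightarrow> real) \<Rightarrow> ((nat \<Rightarrow> nat) \<Rightarrow> bool) \<Rightarrow> real" where
  "inner N m rho P = (\<Sum>r\<in>PiE {1..N} (\<lambda>_. {1..m}).
           (\<Prod>mu\<in>{1..N}. rho (r mu)) * (if P r then 1 else 0))"

definition colsum :: "nat \<Rightarrow> (nat \<Rightarrow> real) \<Rightarrow> nat set \<Rightarrow> real" where
  "colsum m rho B = (\<Sum>x\<in>{1..m}. rho x * (if x \<in> B then 1 else 0))"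

lemma Q:
  "inner N m rho (\<lambda>r. \<forall>mu\<in>{1..N}. r mu \<in> G mu) = (\<Prod>mu\<in>{1..N}. colsum m rho (G mu))"
proof -
  have "inner N m rho (\<lambda>r. \<forall>mu\<in>{1..N}. r mu \<in> G mu) =
     (\<Sum>r\<in>PiE {1..N} (\<lambda>_. {1..m}). \<Prod>mu\<in>{1..N}. rho (r mu) * (if r mu \<in> G mu then 1 else 0))"
    unfolding inner_def
    by (intro sum.cong refl) (simp add: prod.distrib prod_ind)
  also have "\<dots> = (\<Prod>mu\<in>{1..N}. colsum m rho (G mu))"
    unfolding colsum_def by (subst prod_sum_PiE) auto
  finally show ?thesis .
qed

lemma inner_cong:
  assumes "\<And>r. r \<in> PiE {1..N} (\<lambda>_. {1..m}) \<Longrightarrow> P r = P' r"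
  shows "inner N m rho P = inner N m rho P'"
  unfolding inner_def using assms by (intro sum.cong refl) auto

lemma inner_diff:
  "inner N m rho (\<lambda>r. P r \<and> \<not> Q r) = inner N m rho P - inner N m rho (\<lambda>r. P r \<and> Q r)"
  unfolding inner_def by (subst sum_subtractf[symmetric]) (intro sum.cong refl, auto)

lemma prod_two:
  assumes "k \<in> {1..N::nat}"
  shows "(\<Prod>mu\<in>{1..N}. f (if mu = k then B else C)) = f B * f C ^ (N - 1)"
proof -
  have "(\<Prod>mu\<in>{1..N}. f (if mu = k then B else C)) = f B * (\<Prod>mu\<in>{1..N} - {k}. f (if mu = k then B else C))"
    using assms by (subst prod.remove[of _ k]) auto
  also have "(\<Prod>mu\<in>{1..N} - {k}. f (if mu = k then B else C)) = (\<Prod>mu\<in>{1..N} - {k}. f C)"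
    by (intro prod.cong) auto
  also have "\<dots> = f C ^ (N - 1)" using assms by simp
  finally show ?thesis .
qed

lemma Q2:
  assumes "k \<in> {1..N}"
  shows "inner N m rho (\<lambda>r. r k \<in> B \<and> (\<forall>mu\<in>{1..N}. mu \<noteq> k \<longrightarrow> r mu \<in> C))
     = colsum m rho B * colsum m rho C ^ (N - 1)"
proof -
  have "inner N m rho (\<lambda>r. r k \<in> B \<and> (\<forall>mu\<in>{1..N}. mu \<noteq> k \<longrightarrow> r mu \<in> C))
      = inner N m rho (\<lambda>r. \<forall>mu\<in>{1..N}. r mu \<in> (if mu = k then B else C))"
    using assms by (intro inner_cong) auto
  also have "\<dots> = colsum m rho B * colsum m rho C ^ (N - 1)"
    unfolding Q using assms by (rule prod_two)
  finally show ?thesis .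
qed

lemma colsum_eq: "colsum m rho B = (\<Sum>x\<in>{1..m} \<inter> B. rho x)"
  unfolding colsum_def by (simp add: sum.inter_restrict if_distrib cong: if_cong)

lemma colsums:
  assumes "k \<in> {1..N}" "N \<le> m" "(\<Sum>l\<in>{1..m}. rho l) = 1"
  shows "colsum m rho UNIV = 1" "colsum m rho {k} = rho k"
    "colsum m rho (- {k}) = 1 - rho k"
    "colsum m rho ({1..N} - {k}) = P_hit N rho - rho k"
    "colsum m rho (- {1..N}) = 1 - P_hit N rho"
proof -
  show "colsum m rho UNIV = 1" using assms by (simp add: colsum_eq)
  have km: "k \<in> {1..m}" using assms by auto
  show "colsum m rho {k} = rho k" using km by (simp add: colsum_eq)
  have "{1..m} \<inter> - {k} = {1..m} - {k}" by auto
  thus "colsum m rho (- {k}) = 1 - rho k" using km assms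
    by (simp add: colsum_eq sum_diff1)
  have "{1..m} \<inter> ({1..N} - {k}) = {1..N} - {k}" using assms by auto
  thus "colsum m rho ({1..N} - {k}) = P_hit N rho - rho k" using assms
    by (simp add: colsum_eq sum_diff1 P_hit_def)
  have "{1..m} \<inter> - {1..N} = {1..m} - {1..N}" by auto
  moreover have "{1..N} \<subseteq> {1..m}" using assms by auto
  ultimately show "colsum m rho (- {1..N}) = 1 - P_hit N rho" using assms
    by (simp add: colsum_eq sum_diff P_hit_def)
qed

lemma Q3:
  assumes "k \<in> {1..N}" "j \<in> {1..N}" "j \<noteq> k" "N \<le> m" "(\<Sum>l\<in>{1..m}. rho l) = 1"
  shows "inner N m rho (\<lambda>r. r k = j \<and> r j = k) = rho j * rho k"
proof -
  have "inner N m rho (\<lambda>r. r k = j \<and> r j = k)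
      = inner N m rho (\<lambda>r. \<forall>mu\<in>{1..N}. r mu \<in> (if mu = k then {j} else if mu = j then {k} else UNIV))"
    using assms by (intro inner_cong) auto
  also have "\<dots> = (\<Prod>mu\<in>{1..N}. colsum m rho (if mu = k then {j} else if mu = j then {k} else UNIV))"
    by (rule Q)
  also have "\<dots> = colsum m rho {j} * (\<Prod>mu\<in>{1..N} - {k}. colsum m rho (if mu = k then {j} else if mu = j then {k} else UNIV))"
    using assms by (subst prod.remove[of _ k]) auto
  also have "(\<Prod>mu\<in>{1..N} - {k}. colsum m rho (if mu = k then {j} else if mu = j then {k} else UNIV))
     = colsum m rho {k} * (\<Prod>mu\<in>{1..N} - {k} - {j}. colsum m rho (if mu = k then {j} else if mu = j then {k} else UNIV))"
    using assms by (subst prod.remove[of _ j]) auto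
  also have "(\<Prod>mu\<in>{1..N} - {k} - {j}. colsum m rho (if mu = k then {j} else if mu = j then {k} else UNIV))
     = (\<Prod>mu\<in>{1..N} - {k} - {j}. colsum m rho UNIV)"
    by (intro prod.cong) auto
  finally have e: "inner N m rho (\<lambda>r. r k = j \<and> r j = k) = colsum m rho {j} * (colsum m rho {k} * colsum m rho UNIV ^ card ({1..N} - {k} - {j}))"
    by simp
  have c1: "colsum m rho {x} = rho x" if "x \<in> {1..m}" for x
    unfolding colsum_def using that by (simp add: sum.delta' if_distrib cong: if_cong)
  have c2: "colsum m rho UNIV = 1" using colsums assms by blast
  show ?thesis using e c1 c2 assms by auto
qed


lemma bfd_ind:
  assumes "k \<in> {1..N::nat}"
  shows "(if \<exists>j\<in>{1..N} - {k}. r k = j \<and> r j = k then 1 else 0::real)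
       = (\<Sum>j\<in>{1..N} - {k}. if r k = j \<and> r j = k then 1 else 0)"
proof -
  have "(\<Sum>j\<in>{1..N} - {k}. if r k = j \<and> r j = k then 1 else (0::real))
      = (\<Sum>j\<in>{1..N} - {k}. if r k = j then (if r (r k) = k then 1 else 0) else 0)"
    by (intro sum.cong) auto
  also have "\<dots> = (if r k \<in> {1..N} - {k} then (if r (r k) = k then 1 else 0) else 0)"
    by (simp add: sum.delta')
  finally show ?thesis by auto
qed

lemma per_k:
  assumes k: "k \<in> {1..N}" and Nm: "N \<le> m" and s1: "(\<Sum>l\<in>{1..m}. rho l) = 1"
  shows
   "inner N m rho (\<lambda>r. in_mode N r k SR) = rho k * (1 - rho k) ^ (N - 1)"
   "inner N m rho (\<lambda>r. in_mode N r k SR_HDTX) = rho k * (1 - (1 - rho k) ^ (N - 1))"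
   "inner N m rho (\<lambda>r. in_mode N r k FDTR) = (P_hit N rho - rho k) * (1 - (1 - rho k) ^ (N - 1))"
   "inner N m rho (\<lambda>r. in_mode N r k BFD) = (P_hit N rho - rho k) * rho k"
   "inner N m rho (\<lambda>r. in_mode N r k TNFD) = (P_hit N rho - rho k) * (1 - rho k - (1 - rho k) ^ (N - 1))"
   "inner N m rho (\<lambda>r. in_mode N r k HDRX) = (P_hit N rho - rho k) * (1 - rho k) ^ (N - 1)"
   "inner N m rho (\<lambda>r. in_mode N r k HDTX) = (1 - P_hit N rho) * (1 - (1 - rho k) ^ (N - 1))"
   "inner N m rho (\<lambda>r. in_mode N r k HO) = (1 - P_hit N rho) * (1 - rho k) ^ (N - 1)"
proof -
  note cs = colsums[OF k Nm s1]
  define NS where "NS = (\<lambda>r::nat\<Rightarrow>nat. \<forall>mu\<in>{1..N}. mu \<noteq> k \<longrightarrow> r mu \<in> - {k})"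
  have nS: "S_event N r k \<longleftrightarrow> \<not> NS r" for r unfolding NS_def S_event_def by auto
  have marg: "inner N m rho (\<lambda>r. r k \<in> B) = colsum m rho B" for B
  proof -
    have "inner N m rho (\<lambda>r. r k \<in> B) = inner N m rho (\<lambda>r. r k \<in> B \<and> (\<forall>mu\<in>{1..N}. mu \<noteq> k \<longrightarrow> r mu \<in> UNIV))"
      by simp
    also have "\<dots> = colsum m rho B" using Q2[OF k, of m rho B UNIV] cs by simp
    finally show ?thesis .
  qed
  have both: "inner N m rho (\<lambda>r. r k \<in> B \<and> NS r) = colsum m rho B * (1 - rho k) ^ (N - 1)" for B
    unfolding NS_def using Q2[OF k, of m rho B "- {k}"] cs by simp
  have neg: "inner N m rho (\<lambda>r. r k \<in> B \<and> \<not> NS r) = colsum m rho B * (1 - (1 - rho k) ^ (N - 1))" for B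
    using inner_diff[of N m rho "\<lambda>r. r k \<in> B" NS] marg both by (simp add: algebra_simps)
  have ex: "(\<exists>mu\<in>{1..N} - {k}. r k = mu) \<longleftrightarrow> r k \<in> {1..N} - {k}" for r by auto
  show 1: "inner N m rho (\<lambda>r. in_mode N r k SR) = rho k * (1 - rho k) ^ (N - 1)"
    using both[of "{k}"] cs unfolding in_mode_def by (simp add: nS)
  show "inner N m rho (\<lambda>r. in_mode N r k SR_HDTX) = rho k * (1 - (1 - rho k) ^ (N - 1))"
    using neg[of "{k}"] cs unfolding in_mode_def by (simp add: nS)
  show 3: "inner N m rho (\<lambda>r. in_mode N r k FDTR) = (P_hit N rho - rho k) * (1 - (1 - rho k) ^ (N - 1))"
    using neg[of "{1..N} - {k}"] cs unfolding in_mode_def by (simp only: nS ex mode.case not_not)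
  show "inner N m rho (\<lambda>r. in_mode N r k HDRX) = (P_hit N rho - rho k) * (1 - rho k) ^ (N - 1)"
    using both[of "{1..N} - {k}"] cs unfolding in_mode_def by (simp only: nS ex mode.case not_not)
  show "inner N m rho (\<lambda>r. in_mode N r k HDTX) = (1 - P_hit N rho) * (1 - (1 - rho k) ^ (N - 1))"
    using neg[of "- {1..N}"] cs unfolding in_mode_def by (simp add: nS)
  show "inner N m rho (\<lambda>r. in_mode N r k HO) = (1 - P_hit N rho) * (1 - rho k) ^ (N - 1)"
    using both[of "- {1..N}"] cs unfolding in_mode_def by (simp add: nS)
  have 4: "inner N m rho (\<lambda>r. in_mode N r k BFD) = (P_hit N rho - rho k) * rho k"
  proof -
    have "inner N m rho (\<lambda>r. in_mode N r k BFD)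
        = (\<Sum>r\<in>PiE {1..N} (\<lambda>_. {1..m}). \<Sum>j\<in>{1..N} - {k}.
             (\<Prod>mu\<in>{1..N}. rho (r mu)) * (if r k = j \<and> r j = k then 1 else 0))"
      unfolding inner_def in_mode_def mode.case
      by (intro sum.cong refl) (simp only: bfd_ind[OF k] sum_distrib_left)
    also have "\<dots> = (\<Sum>j\<in>{1..N} - {k}. inner N m rho (\<lambda>r. r k = j \<and> r j = k))"
      unfolding inner_def by (rule sum.swap)
    also have "\<dots> = (\<Sum>j\<in>{1..N} - {k}. rho j * rho k)"
      using Q3[OF k _ _ Nm s1] by (intro sum.cong) auto
    also have "\<dots> = (P_hit N rho - rho k) * rho k"
      using k by (simp add: sum_distrib_right[symmetric] sum_diff1 P_hit_def)
    finally show ?thesis .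
  qed
  thus "inner N m rho (\<lambda>r. in_mode N r k BFD) = (P_hit N rho - rho k) * rho k" .
  have "inner N m rho (\<lambda>r. in_mode N r k TNFD) =
      inner N m rho (\<lambda>r. in_mode N r k FDTR) - inner N m rho (\<lambda>r. in_mode N r k FDTR \<and> in_mode N r k BFD)"
    unfolding in_mode_def mode.case by (rule inner_diff)
  also have "inner N m rho (\<lambda>r. in_mode N r k FDTR \<and> in_mode N r k BFD) = inner N m rho (\<lambda>r. in_mode N r k BFD)"
    by (rule inner_cong) (auto simp: in_mode_def S_event_def intro!: bexI[where x="r k" for r])
  finally show "inner N m rho (\<lambda>r. in_mode N r k TNFD) = (P_hit N rho - rho k) * (1 - rho k - (1 - rho k) ^ (N - 1))"
    using 3 4 by (simp add: algebra_simps)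
qed

lemma P_mode_inner: "P_mode N m rho D = (1 / real N) * (\<Sum>k\<in>{1..N}. inner N m rho (\<lambda>r. in_mode N r k D))"
  unfolding P_mode_def inner_def by (simp add: sum_distrib_left)

theorem theorem1:
  fixes N m :: nat and rho :: "nat \<Rightarrow> real"
  assumes "N \<ge> 2" and "m \<ge> N"
    and "\<forall>l\<in>{1..m}. rho l \<ge> 0" and "(\<Sum>l\<in>{1..m}. rho l) = 1"
  shows "(P_mode N m rho SR = (1 / real N) * (\<Sum>k\<in>{1..N}. rho k * (1 - rho k) ^ (N - 1)) \<and>
    P_mode N m rho SR_HDTX = (1 / real N) * (\<Sum>k\<in>{1..N}. rho k * (1 - (1 - rho k) ^ (N - 1))) \<and>
    P_mode N m rho FDTR = (1 / real N) *
           (\<Sum>k\<in>{1..N}. (P_hit N rho - rho k) * (1 - (1 - rho k) ^ (N - 1))) \<and>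
    P_mode N m rho BFD = (1 / real N) * (\<Sum>k\<in>{1..N}. (P_hit N rho - rho k) * rho k) \<and>
    P_mode N m rho TNFD = (1 / real N) *
           (\<Sum>k\<in>{1..N}. (P_hit N rho - rho k) * (1 - rho k - (1 - rho k) ^ (N - 1))) \<and>
    P_mode N m rho HDRX = (1 / real N) *
           (\<Sum>k\<in>{1..N}. (P_hit N rho - rho k) * (1 - rho k) ^ (N - 1)) \<and>
    P_mode N m rho HDTX = (1 / real N) *
           (\<Sum>k\<in>{1..N}. (1 - P_hit N rho) * (1 - (1 - rho k) ^ (N - 1))) \<and>
    P_mode N m rho HO = (1 / real N) *
           (\<Sum>k\<in>{1..N}. (1 - P_hit N rho) * (1 - rho k) ^ (N - 1)))"
  using per_k[OF _ assms(2) assms(4)]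
  by (simp add: P_mode_inner)

end
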